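(* There exist absolute constants $c>0$ and $n_0$ with the following property. For any integer $B\ge1$, any $\eta\in(0,1/2)$, any $\epsilon\in(0,1)$ and any $n\ge n_0$, there exist a sequence of $n\times n$ matrices $(A(k))_{k\ge0}$, a positive integer $Q$ (depending on $n$), and an initial vector $x(0)\in\mathbb{R}^n$ whose components are multiples of $1/Q$, such that: each $A(k)$ is doubly stochastic with positive diagonal entries and all positive entries at least $\eta$; for every integer $k\ge0$ the directed graph $(N,\mathcal{E}(A(kB))\cup\cdots\cup\mathcal{E}(A((k+1)B-1)))$ is strongly connected; and under the dynamics $x_i(k+1)=\lfloor\sum_j a_{ij}(k)x_j(k)\rfloor$ (rounding down to the nearest multiple of $1/Q$), whenever $\underline{V}(x(k))/\underline{V}(x(0))\le\epsilon$ we have \[k\ge c\,\frac{n^2}{\eta}\,B\log\frac1\epsilon.\]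
   Context: $N=\{1,\dots,n\}$. A matrix is doubly stochastic if it is nonnegative with all row and column sums equal to $1$. For a matrix $A=[a_{ij}]$, $\mathcal{E}(A)$ is the set of directed edges $(j,i)$ (including self-edges) with $a_{ij}>0$. For $x\in\mathbb{R}^n$, $m(x)=\min_ix_i$ and $\underline{V}(x)=\sum_i(x_i-m(x))^2$. *)

theory Defs
  imports Complex_Main
begin

text \<open>Index set N is rendered as {..<n} (0-based). Matrices are nat \<Rightarrow> nat \<Rightarrow> real,
  entry (i,j) is M i j; vectors are nat \<Rightarrow> real; only indices < n matter.\<close>

definition doubly_stochastic :: "nat \<Rightarrow> (nat \<Rightarrow> nat \<Rightarrow> real) \<Rightarrow> bool" where
  "doubly_stochastic n M \<longleftrightarrow>
     (\<forall>i<n. \<forall>j<n. M i j \<ge> 0) \<and>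
     (\<forall>i<n. (\<Sum>j<n. M i j) = 1) \<and>
     (\<forall>j<n. (\<Sum>i<n. M i j) = 1)"

definition edges :: "nat \<Rightarrow> (nat \<Rightarrow> nat \<Rightarrow> real) \<Rightarrow> (nat \<times> nat) set" where
  "edges n M = {(j, i). i < n \<and> j < n \<and> M i j > 0}"

definition strongly_connected :: "nat \<Rightarrow> (nat \<times> nat) set \<Rightarrow> bool" where
  "strongly_connected n E \<longleftrightarrow> (\<forall>i<n. \<forall>j<n. (i, j) \<in> E\<^sup>*)"

definition minval :: "nat \<Rightarrow> (nat \<Rightarrow> real) \<Rightarrow> real" where
  "minval n x = Min (x ` {..<n})"

definition Vlow :: "nat \<Rightarrow> (nat \<Rightarrow> real) \<Rightarrow> real" where
  "Vlow n x = (\<Sum>i<n. (x i - minval n x)\<^sup>2)"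

definition floorQ :: "nat \<Rightarrow> real \<Rightarrow> real" where
  "floorQ Q y = real_of_int \<lfloor>real Q * y\<rfloor> / real Q"

primrec traj :: "nat \<Rightarrow> nat \<Rightarrow> (nat \<Rightarrow> nat \<Rightarrow> nat \<Rightarrow> real) \<Rightarrow> (nat \<Rightarrow> real) \<Rightarrow> nat \<Rightarrow> nat \<Rightarrow> real" where
  "traj n Q A x0 0 = x0"
| "traj n Q A x0 (Suc k) = (\<lambda>i. floorQ Q (\<Sum>j<n. A k i j * traj n Q A x0 k j))"

end

theory Submission
  imports Defs
begin


definition mv :: "nat \<Rightarrow> (nat \<Rightarrow> nat \<Rightarrow> real) \<Rightarrow> (nat \<Rightarrow> real) \<Rightarrow> nat \<Rightarrow> real" where
  "mv n M z = (\<lambda>i. \<Sum>j<n. M i j * z j)"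

definition prd :: "nat \<Rightarrow> nat \<Rightarrow> nat" where "prd n i = (i + n - 1) mod n"
definition sc :: "nat \<Rightarrow> nat \<Rightarrow> nat" where "sc n i = Suc i mod n"

definition Ma :: "nat \<Rightarrow> real \<Rightarrow> nat \<Rightarrow> nat \<Rightarrow> real" where
  "Ma n r i j = (if j = i then 1 - r else 0) + (if j = prd n i then r else 0)"
definition Mb :: "nat \<Rightarrow> real \<Rightarrow> nat \<Rightarrow> nat \<Rightarrow> real" where
  "Mb n r i j = (if j = i then 1 - r else 0) + (if j = sc n i then r else 0)"
definition Im :: "nat \<Rightarrow> nat \<Rightarrow> real" where
  "Im i j = (if i = j then 1 else 0)"

lemma prd_eq: "i < n \<Longrightarrow> prd n i = (if i = 0 then n - 1 else i - 1)"
proof (cases "i = 0")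
  case True assume "i < n" then show ?thesis using True by (simp add: prd_def)
next
  case False assume "i < n"
  then have "i + n - 1 = (i - 1) + n" using False by simp
  then have "prd n i = ((i - 1) + n) mod n" by (simp add: prd_def)
  also have "\<dots> = i - 1" using \<open>i<n\<close> by simp
  finally show ?thesis using False by simp
qed

lemma sc_eq: "i < n \<Longrightarrow> sc n i = (if i = n - 1 then 0 else i + 1)"
  by (auto simp: sc_def)

lemma prd_lt: "i < n \<Longrightarrow> prd n i < n" by (simp add: prd_def)
lemma sc_lt: "i < n \<Longrightarrow> sc n i < n" by (simp add: sc_def)

lemma prd_iff: "i < n \<Longrightarrow> j < n \<Longrightarrow> (j = prd n i) = (i = sc n j)"
  by (auto simp: prd_eq sc_eq)

lemma sc_iff: "i < n \<Longrightarrow> j < n \<Longrightarrow> (j = sc n i) = (i = prd n j)"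
  by (auto simp: prd_eq sc_eq)

lemma prd_sc: "i < n \<Longrightarrow> prd n (sc n i) = i"
  using prd_iff[of "sc n i" n i] sc_lt by auto

lemma mv_Ma: "i < n \<Longrightarrow> mv n (Ma n r) z i = (1 - r) * z i + r * z (prd n i)"
proof -
  assume i: "i < n"
  have "mv n (Ma n r) z i = (\<Sum>j<n. (if j = i then (1 - r) * z j else 0) + (if j = prd n i then r * z j else 0))"
    unfolding mv_def Ma_def by (rule sum.cong) (auto simp: distrib_right)
  also have "\<dots> = (1 - r) * z i + r * z (prd n i)"
    using i prd_lt[OF i] by (simp add: sum.distrib del: One_nat_def)
  finally show ?thesis .
qed

lemma mv_Mb: "i < n \<Longrightarrow> mv n (Mb n r) z i = (1 - r) * z i + r * z (sc n i)"
proof -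
  assume i: "i < n"
  have "mv n (Mb n r) z i = (\<Sum>j<n. (if j = i then (1 - r) * z j else 0) + (if j = sc n i then r * z j else 0))"
    unfolding mv_def Mb_def by (rule sum.cong) (auto simp: distrib_right)
  also have "\<dots> = (1 - r) * z i + r * z (sc n i)"
    using i sc_lt[OF i] by (simp add: sum.distrib del: One_nat_def)
  finally show ?thesis .
qed

lemma mv_Im: "i < n \<Longrightarrow> mv n Im z i = z i"
proof -
  assume "i < n"
  have "mv n Im z i = (\<Sum>j<n. if i = j then z j else 0)"
    unfolding mv_def Im_def by (rule sum.cong) auto
  then show ?thesis using \<open>i<n\<close> by simp
qed

lemma mv_cong: "(\<And>j. j < n \<Longrightarrow> z j = z' j) \<Longrightarrow> mv n M z = mv n M z'"
  unfolding mv_def by (intro ext sum.cong) auto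

lemma mv_scale: "mv n M (\<lambda>i. a * z i) = (\<lambda>i. a * mv n M z i)"
  unfolding mv_def by (simp add: sum_distrib_left algebra_simps)

lemma ds_Ma: assumes "0 \<le> r" "r \<le> 1" shows "doubly_stochastic n (Ma n r)"
proof -
  have row: "(\<Sum>j<n. Ma n r i j) = 1" if "i < n" for i
    using that prd_lt[OF that] by (simp add: Ma_def sum.distrib)
  have col: "(\<Sum>i<n. Ma n r i j) = 1" if "j < n" for j
  proof -
    have "(\<Sum>i<n. Ma n r i j) = (\<Sum>i<n. (if j = i then 1 - r else 0) + (if i = sc n j then r else 0))"
      unfolding Ma_def using that by (intro sum.cong) (auto simp: prd_iff)
    also have "\<dots> = 1" using that sc_lt[OF that] by (simp add: sum.distrib)
    finally show ?thesis .
  qed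
  show ?thesis using assms row col unfolding doubly_stochastic_def by (auto simp: Ma_def)
qed

lemma ds_Mb: assumes "0 \<le> r" "r \<le> 1" shows "doubly_stochastic n (Mb n r)"
proof -
  have row: "(\<Sum>j<n. Mb n r i j) = 1" if "i < n" for i
    using that sc_lt[OF that] by (simp add: Mb_def sum.distrib)
  have col: "(\<Sum>i<n. Mb n r i j) = 1" if "j < n" for j
  proof -
    have "(\<Sum>i<n. Mb n r i j) = (\<Sum>i<n. (if j = i then 1 - r else 0) + (if i = prd n j then r else 0))"
      unfolding Mb_def using that by (intro sum.cong) (auto simp: sc_iff)
    also have "\<dots> = 1" using that prd_lt[OF that] by (simp add: sum.distrib)
    finally show ?thesis .
  qed
  show ?thesis using assms row col unfolding doubly_stochastic_def by (auto simp: Mb_def)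
qed

lemma ds_Im: "doubly_stochastic n Im"
  unfolding doubly_stochastic_def Im_def by (auto simp: if_distrib cong: if_cong)



lemma minval_le: "i < n \<Longrightarrow> minval n x \<le> x i"
  unfolding minval_def by (rule Min_le) auto

lemma minval_in: "0 < n \<Longrightarrow> \<exists>i<n. x i = minval n x"
proof -
  assume "0 < n"
  then have "Min (x ` {..<n}) \<in> x ` {..<n}" by (intro Min_in) auto
  then show ?thesis unfolding minval_def by auto
qed

lemma minval_cong: "(\<And>i. i < n \<Longrightarrow> x i = y i) \<Longrightarrow> minval n x = minval n y"
  unfolding minval_def by (metis image_cong lessThan_iff)

lemma Vlow_cong: "(\<And>i. i < n \<Longrightarrow> x i = y i) \<Longrightarrow> Vlow n x = Vlow n y"
  unfolding Vlow_def using minval_cong[of n x y] by (intro sum.cong) auto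

lemma minval_scale: assumes "0 \<le> a" "0 < n" shows "minval n (\<lambda>i. a * x i) = a * minval n x"
proof -
  have "mono ((*) a)" using assms by (auto intro: monoI mult_left_mono)
  then have "(*) a (Min (x ` {..<n})) = Min ((*) a ` (x ` {..<n}))"
    using assms by (intro mono_Min_commute) auto
  then show ?thesis unfolding minval_def by (simp add: image_image)
qed

lemma Vlow_scale: assumes "0 \<le> a" "0 < n" shows "Vlow n (\<lambda>i. a * x i) = a\<^sup>2 * Vlow n x"
  unfolding Vlow_def minval_scale[OF assms]
  by (simp add: sum_distrib_left power2_eq_square algebra_simps)

lemma Vlow_nonneg: "0 \<le> Vlow n x"
  unfolding Vlow_def by (simp add: sum_nonneg)

lemma jensen_sq:
  fixes w z :: "nat \<Rightarrow> real"
  assumes "\<And>j. j < n \<Longrightarrow> 0 \<le> w j" "(\<Sum>j<n. w j) = 1"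
  shows "(\<Sum>j<n. w j * z j)\<^sup>2 \<le> (\<Sum>j<n. w j * (z j)\<^sup>2)"
proof -
  define s where "s = (\<Sum>j<n. w j * z j)"
  have "0 \<le> (\<Sum>j<n. w j * (z j - s)\<^sup>2)" using assms by (intro sum_nonneg) auto
  also have "\<dots> = (\<Sum>j<n. w j * (z j)\<^sup>2 - (2 * s) * (w j * z j) + s\<^sup>2 * w j)"
    by (intro sum.cong) (auto simp: power2_eq_square algebra_simps)
  also have "\<dots> = (\<Sum>j<n. w j * (z j)\<^sup>2) - (2 * s) * (\<Sum>j<n. w j * z j) + s\<^sup>2 * (\<Sum>j<n. w j)"
    by (simp only: sum.distrib sum_subtractf sum_distrib_left)
  finally show ?thesis using assms(2) unfolding s_def by (simp add: power2_eq_square)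
qed

lemma Vlow_mono:
  assumes ds: "doubly_stochastic n M" and n: "0 < n"
  shows "Vlow n (mv n M x) \<le> Vlow n x"
proof -
  define m where "m = minval n x"
  define y where "y = mv n M x"
  have nn: "\<And>i j. i < n \<Longrightarrow> j < n \<Longrightarrow> 0 \<le> M i j" and rs: "\<And>i. i < n \<Longrightarrow> (\<Sum>j<n. M i j) = 1"
    and cs: "\<And>j. j < n \<Longrightarrow> (\<Sum>i<n. M i j) = 1" using ds unfolding doubly_stochastic_def by auto
  have ym: "y i - m = (\<Sum>j<n. M i j * (x j - m))" if "i < n" for i
  proof -
    have "y i - m = (\<Sum>j<n. M i j * x j) - (\<Sum>j<n. M i j) * m" using rs[OF that] unfolding y_def mv_def by simp
    also have "\<dots> = (\<Sum>j<n. M i j * x j - M i j * m)" by (simp only: sum_subtractf sum_distrib_right)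
    also have "\<dots> = (\<Sum>j<n. M i j * (x j - m))" by (simp only: right_diff_distrib)
    finally show ?thesis .
  qed
  have yge: "m \<le> y i" if "i < n" for i
  proof -
    have "0 \<le> (\<Sum>j<n. M i j * (x j - m))"
      using nn that minval_le[of _ n x] unfolding m_def by (intro sum_nonneg) auto
    then show ?thesis using ym[OF that] by simp
  qed
  have m': "m \<le> minval n y" using minval_in[OF n, of y] yge by force
  have "Vlow n y = (\<Sum>i<n. (y i - minval n y)\<^sup>2)" unfolding Vlow_def ..
  also have "\<dots> \<le> (\<Sum>i<n. (y i - m)\<^sup>2)"
  proof (intro sum_mono)
    fix i assume "i \<in> {..<n}"
    then have "minval n y \<le> y i" by (simp add: minval_le)
    then show "(y i - minval n y)\<^sup>2 \<le> (y i - m)\<^sup>2" using m' by (intro power_mono) auto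
  qed
  also have "\<dots> \<le> (\<Sum>i<n. (\<Sum>j<n. M i j * (x j - m)\<^sup>2))"
    using ym jensen_sq[of n "M _"] nn rs by (intro sum_mono) auto
  also have "\<dots> = (\<Sum>j<n. (\<Sum>i<n. M i j) * (x j - m)\<^sup>2)"
    by (subst sum.swap) (simp add: sum_distrib_right)
  also have "\<dots> = Vlow n x" unfolding Vlow_def m_def using cs by simp
  finally show ?thesis unfolding y_def .
qed

lemma minval_pert:
  assumes "0 < n" "\<And>i. i < n \<Longrightarrow> \<bar>x i - y i\<bar> \<le> e"
  shows "\<bar>minval n x - minval n y\<bar> \<le> e"
proof -
  obtain i where i: "i < n" "x i = minval n x" using minval_in[OF assms(1)] by blast
  obtain j where j: "j < n" "y j = minval n y" using minval_in[OF assms(1)] by blast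
  have "minval n x \<le> x j" "minval n y \<le> y i" using i j minval_le by auto
  then show ?thesis using assms(2)[OF i(1)] assms(2)[OF j(1)] i j by auto
qed

lemma Vlow_pert:
  assumes n: "0 < n" and e: "\<And>i. i < n \<Longrightarrow> \<bar>x i - y i\<bar> \<le> e" and b: "\<And>i. i < n \<Longrightarrow> \<bar>y i\<bar> \<le> 1"
  shows "Vlow n y - 8 * n * e \<le> Vlow n x \<and> Vlow n x \<le> Vlow n y + n * (8 * e + 4 * e\<^sup>2)"
proof -
  have e0: "0 \<le> e" using e[of 0] n by auto
  have mp: "\<bar>minval n x - minval n y\<bar> \<le> e" by (rule minval_pert[OF n e])
  have pt: "(y i - minval n y)\<^sup>2 - 8 * e \<le> (x i - minval n x)\<^sup>2 \<and>
            (x i - minval n x)\<^sup>2 \<le> (y i - minval n y)\<^sup>2 + (8 * e + 4 * e\<^sup>2)" if i: "i < n" for i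
  proof -
    define u where "u = x i - minval n x"
    define v where "v = y i - minval n y"
    have u0: "0 \<le> u" unfolding u_def using minval_le[OF i] by simp
    have v0: "0 \<le> v" unfolding v_def using minval_le[OF i] by simp
    obtain j where j: "j < n" "y j = minval n y" using minval_in[OF n] by blast
    have v2: "v \<le> 2" unfolding v_def using b[OF i] b[OF j(1)] j(2) by auto
    have uv: "\<bar>u - v\<bar> \<le> 2 * e" unfolding u_def v_def using e[OF i] mp by auto
    have l: "v\<^sup>2 - 8 * e \<le> u\<^sup>2"
    proof (cases "v \<le> 4 * e")
      case True
      have "v * v \<le> 2 * v" using mult_right_mono[OF v2 v0] .
      then have "v\<^sup>2 \<le> 8 * e" using True by (simp add: power2_eq_square)
      then show ?thesis using zero_le_power2[of u] by linarith
    next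
      case False
      then have "v - 2 * e \<le> u" "0 \<le> v - 2 * e" using uv e0 by auto
      then have "(v - 2*e)\<^sup>2 \<le> u\<^sup>2" by (intro power_mono) auto
      moreover have "v\<^sup>2 - 8 * e \<le> (v - 2*e)\<^sup>2"
      proof -
        have "(v - 2*e)\<^sup>2 = v\<^sup>2 - 4 * (e * v) + 4 * (e * e)" by (simp add: power2_eq_square algebra_simps)
        moreover have "e * v \<le> e * 2" using mult_left_mono[OF v2 e0] .
        moreover have "0 \<le> e * e" using e0 by simp
        ultimately show ?thesis by linarith
      qed
      ultimately show ?thesis by linarith
    qed
    have r: "u\<^sup>2 \<le> v\<^sup>2 + (8 * e + 4 * e\<^sup>2)"
    proof -
      have "u \<le> v + 2 * e" using uv by auto
      then have "u\<^sup>2 \<le> (v + 2*e)\<^sup>2" using u0 by (intro power_mono) auto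
      also have "\<dots> \<le> v\<^sup>2 + (8 * e + 4 * e\<^sup>2)"
        using mult_left_mono[OF v2 e0] by (simp add: power2_eq_square algebra_simps)
      finally show ?thesis .
    qed
    show ?thesis using l r unfolding u_def v_def by auto
  qed
  have "Vlow n y - 8 * n * e = (\<Sum>i<n. (y i - minval n y)\<^sup>2 - 8 * e)"
    unfolding Vlow_def by (simp add: sum_subtractf)
  also have "\<dots> \<le> Vlow n x" unfolding Vlow_def using pt by (intro sum_mono) auto
  finally have A: "Vlow n y - 8 * n * e \<le> Vlow n x" .
  have "Vlow n x \<le> (\<Sum>i<n. (y i - minval n y)\<^sup>2 + (8 * e + 4 * e\<^sup>2))"
    unfolding Vlow_def using pt by (intro sum_mono) auto
  also have "\<dots> = Vlow n y + n * (8 * e + 4 * e\<^sup>2)" unfolding Vlow_def by (simp add: sum.distrib)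
  finally have "Vlow n x \<le> Vlow n y + n * (8 * e + 4 * e\<^sup>2)" .
  with A show ?thesis by simp
qed



definition cv :: "nat \<Rightarrow> nat \<Rightarrow> real" where "cv n i = cos (2 * pi * real i / real n)"
definition mu :: "nat \<Rightarrow> real \<Rightarrow> real" where "mu n r = 1 - 2 * r * (1 - r) * (1 - cos (2 * pi / real n))"

lemma cv_prd: assumes "2 \<le> n" "i < n"
  shows "cv n (prd n i) = cos (2 * pi * real i / real n - 2 * pi / real n)"
proof (cases "i = 0")
  case True
  have "2 * pi * real (n - 1) / real n = 2 * pi - 2 * pi / real n"
    using assms by (simp add: of_nat_diff field_simps)
  then show ?thesis using True assms by (simp add: prd_eq cv_def cos_diff)
next
  case False
  have "2 * pi * real (i - 1) / real n = 2 * pi * real i / real n - 2 * pi / real n"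
    using False by (simp add: of_nat_diff algebra_simps diff_divide_distrib)
  then show ?thesis using False assms by (simp add: prd_eq cv_def)
qed

lemma cv_sc: assumes "2 \<le> n" "i < n"
  shows "cv n (sc n i) = cos (2 * pi * real i / real n + 2 * pi / real n)"
proof (cases "i = n - 1")
  case True
  have "2 * pi * real i / real n + 2 * pi / real n = 2 * pi"
    using assms True by (simp add: of_nat_diff field_simps)
  then show ?thesis using True assms by (simp add: sc_eq cv_def)
next
  case False
  have "2 * pi * real (i + 1) / real n = 2 * pi * real i / real n + 2 * pi / real n"
    by (simp add: algebra_simps add_divide_distrib)
  then show ?thesis using False assms by (simp add: sc_eq cv_def)
qed

lemma L2_eig: assumes "2 \<le> n" "i < n"
  shows "mv n (Mb n r) (mv n (Ma n r) (cv n)) i = mu n r * cv n i"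
proof -
  define t where "t = 2 * pi * real i / real n"
  define p where "p = 2 * pi / real n"
  have sci: "sc n i < n" using sc_lt assms by simp
  have a1: "mv n (Ma n r) (cv n) i = (1 - r) * cos t + r * cos (t - p)"
    using mv_Ma[OF assms(2)] cv_prd[OF assms] unfolding t_def p_def cv_def by simp
  have a2: "mv n (Ma n r) (cv n) (sc n i) = (1 - r) * cos (t + p) + r * cos t"
    using mv_Ma[OF sci] cv_sc[OF assms] prd_sc[OF assms(2)] unfolding t_def p_def cv_def by simp
  have "mv n (Mb n r) (mv n (Ma n r) (cv n)) i
      = (1 - r) * ((1 - r) * cos t + r * cos (t - p)) + r * ((1 - r) * cos (t + p) + r * cos t)"
    using mv_Mb[OF assms(2)] a1 a2 by simp
  also have "\<dots> = mu n r * cos t"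
    unfolding mu_def p_def[symmetric] by (simp add: cos_add cos_diff algebra_simps)
  finally show ?thesis unfolding t_def cv_def .
qed

primrec Yc :: "nat \<Rightarrow> real \<Rightarrow> nat \<Rightarrow> nat \<Rightarrow> real" where
  "Yc n r 0 = cv n"
| "Yc n r (Suc J) = mv n (if even J then Ma n r else Mb n r) (Yc n r J)"

lemma Yc_even: assumes "2 \<le> n" shows "i < n \<Longrightarrow> Yc n r (2 * q) i = mu n r ^ q * cv n i"
proof (induction q arbitrary: i)
  case 0 then show ?case by simp
next
  case (Suc q)
  have e: "Yc n r (2 * Suc q) = mv n (Mb n r) (mv n (Ma n r) (Yc n r (2 * q)))" by simp
  have "mv n (Ma n r) (Yc n r (2 * q)) = mv n (Ma n r) (\<lambda>i. mu n r ^ q * cv n i)"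
    using Suc.IH by (intro mv_cong) auto
  also have "\<dots> = (\<lambda>i. mu n r ^ q * mv n (Ma n r) (cv n) i)" by (rule mv_scale)
  finally have "Yc n r (2 * Suc q) i = mu n r ^ q * mv n (Mb n r) (mv n (Ma n r) (cv n)) i"
    using e mv_scale[of n "Mb n r" "mu n r ^ q"] by (metis (no_types))
  then show ?case using L2_eig[OF assms Suc.prems] by simp
qed

lemma Vlow_Yc:
  assumes n: "2 \<le> n" and r: "0 \<le> r" "r \<le> 1" and m: "0 \<le> mu n r"
  shows "mu n r ^ (2 * ((J + 1) div 2)) * Vlow n (cv n) \<le> Vlow n (Yc n r J)"
proof -
  have n0: "0 < n" using n by simp
  have ev: "Vlow n (Yc n r (2 * q)) = mu n r ^ (2 * q) * Vlow n (cv n)" for q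
  proof -
    have "Vlow n (Yc n r (2 * q)) = Vlow n (\<lambda>i. mu n r ^ q * cv n i)"
      by (rule Vlow_cong) (use Yc_even[OF n] in auto)
    also have "\<dots> = (mu n r ^ q)\<^sup>2 * Vlow n (cv n)" using m n0 by (intro Vlow_scale) auto
    finally show ?thesis by (simp add: power_mult[symmetric] mult.commute)
  qed
  show ?thesis
  proof (cases "even J")
    case True
    then obtain q where J: "J = 2 * q" by blast
    then have "(J + 1) div 2 = q" by simp
    then show ?thesis using ev J by simp
  next
    case False
    then obtain q where J: "J = 2 * q + 1" using oddE by blast
    then have d: "(J + 1) div 2 = q + 1" by simp
    have "Yc n r (2 * (q + 1)) = mv n (Mb n r) (Yc n r J)" using J by simp
    then have "Vlow n (Yc n r (2 * (q + 1))) \<le> Vlow n (Yc n r J)"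
      using Vlow_mono[OF ds_Mb[OF r] n0] by simp
    then show ?thesis using ev[of "q+1"] d by simp
  qed
qed



definition Aseq :: "nat \<Rightarrow> real \<Rightarrow> nat \<Rightarrow> nat \<Rightarrow> nat \<Rightarrow> nat \<Rightarrow> real" where
  "Aseq n r B t = (if t mod B = B - 1 then (if even (t div B) then Ma n r else Mb n r) else Im)"

primrec yex :: "nat \<Rightarrow> (nat \<Rightarrow> nat \<Rightarrow> nat \<Rightarrow> real) \<Rightarrow> (nat \<Rightarrow> real) \<Rightarrow> nat \<Rightarrow> nat \<Rightarrow> real" where
  "yex n A z 0 = z"
| "yex n A z (Suc k) = mv n (A k) (yex n A z k)"

lemma yex_Yc: assumes B: "1 \<le> B" shows "i < n \<Longrightarrow> yex n (Aseq n r B) (cv n) k i = Yc n r (k div B) i"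
proof (induction k arbitrary: i)
  case 0 then show ?case by simp
next
  case (Suc k)
  have "yex n (Aseq n r B) (cv n) (Suc k) i = mv n (Aseq n r B k) (yex n (Aseq n r B) (cv n) k) i" by simp
  also have "\<dots> = mv n (Aseq n r B k) (Yc n r (k div B)) i"
  proof -
    have "mv n (Aseq n r B k) (yex n (Aseq n r B) (cv n) k) = mv n (Aseq n r B k) (Yc n r (k div B))"
      by (rule mv_cong) (erule Suc.IH)
    then show ?thesis by (rule fun_cong)
  qed
  also have "\<dots> = Yc n r (Suc k div B) i"
  proof (cases "k mod B = B - 1")
    case True
    have "Suc k mod B = 0" using True B by (simp add: mod_Suc)
    then have d: "Suc k div B = Suc (k div B)" by (simp add: div_Suc)
    have "Aseq n r B k = (if even (k div B) then Ma n r else Mb n r)" using True by (simp add: Aseq_def)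
    then show ?thesis unfolding d by simp
  next
    case False
    have "Suc k mod B \<noteq> 0" using False B by (auto simp: mod_Suc)
    then have d: "Suc k div B = k div B" by (simp add: div_Suc)
    have "Aseq n r B k = Im" using False by (simp add: Aseq_def)
    then show ?thesis unfolding d using mv_Im[OF Suc.prems] by simp
  qed
  finally show ?case .
qed

lemma yex_bound:
  assumes ds: "\<And>k. doubly_stochastic n (A k)" and z: "\<And>i. i < n \<Longrightarrow> \<bar>z i\<bar> \<le> 1"
  shows "i < n \<Longrightarrow> \<bar>yex n A z k i\<bar> \<le> 1"
proof (induction k arbitrary: i)
  case 0 then show ?case using z by simp
next
  case (Suc k)
  have nn: "\<And>j. j < n \<Longrightarrow> 0 \<le> A k i j" and rs: "(\<Sum>j<n. A k i j) = 1"
    using ds[of k] Suc.prems unfolding doubly_stochastic_def by auto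
  have "\<bar>yex n A z (Suc k) i\<bar> = \<bar>\<Sum>j<n. A k i j * yex n A z k j\<bar>" by (simp add: mv_def)
  also have "\<dots> \<le> (\<Sum>j<n. \<bar>A k i j * yex n A z k j\<bar>)" by (rule sum_abs)
  also have "\<dots> \<le> (\<Sum>j<n. A k i j * 1)"
  proof (intro sum_mono)
    fix j assume "j \<in> {..<n}"
    then have "j < n" by simp
    show "\<bar>A k i j * yex n A z k j\<bar> \<le> A k i j * 1"
      using mult_left_mono[OF Suc.IH[OF \<open>j<n\<close>] nn[OF \<open>j<n\<close>]] nn[OF \<open>j<n\<close>] by (simp add: abs_mult)
  qed
  also have "\<dots> = 1" using rs by simp
  finally show ?case .
qed

lemma floorQ_bounds: assumes "0 < Q" shows "s - 1 / real Q \<le> floorQ Q s" "floorQ Q s \<le> s"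
proof -
  have Q: "0 < real Q" using assms by simp
  have a: "real Q * s - 1 \<le> real_of_int \<lfloor>real Q * s\<rfloor>" "real_of_int \<lfloor>real Q * s\<rfloor> \<le> real Q * s"
    by linarith+
  have "(real Q * s - 1) / real Q \<le> real_of_int \<lfloor>real Q * s\<rfloor> / real Q"
    using a(1) Q by (intro divide_right_mono) auto
  moreover have "(real Q * s - 1) / real Q = s - 1 / real Q" using Q by (simp add: diff_divide_distrib)
  ultimately show "s - 1 / real Q \<le> floorQ Q s" unfolding floorQ_def by simp
  show "floorQ Q s \<le> s" unfolding floorQ_def using a(2) Q by (simp add: field_simps)
qed

lemma traj_err:
  assumes Q: "0 < Q" and ds: "\<And>k. doubly_stochastic n (A k)"
    and x0: "\<And>i. i < n \<Longrightarrow> \<bar>x0 i - z i\<bar> \<le> 1 / real Q"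
  shows "i < n \<Longrightarrow> \<bar>traj n Q A x0 k i - yex n A z k i\<bar> \<le> (real k + 1) / real Q"
proof (induction k arbitrary: i)
  case 0 then show ?case using x0 by simp
next
  case (Suc k)
  have nn: "\<And>j. j < n \<Longrightarrow> 0 \<le> A k i j" and rs: "(\<Sum>j<n. A k i j) = 1"
    using ds[of k] Suc.prems unfolding doubly_stochastic_def by auto
  define s where "s = (\<Sum>j<n. A k i j * traj n Q A x0 k j)"
  define t where "t = (\<Sum>j<n. A k i j * yex n A z k j)"
  have "\<bar>s - t\<bar> = \<bar>\<Sum>j<n. A k i j * (traj n Q A x0 k j - yex n A z k j)\<bar>"
    unfolding s_def t_def by (simp add: sum_subtractf right_diff_distrib)
  also have "\<dots> \<le> (\<Sum>j<n. \<bar>A k i j * (traj n Q A x0 k j - yex n A z k j)\<bar>)" by (rule sum_abs)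
  also have "\<dots> \<le> (\<Sum>j<n. A k i j * ((real k + 1) / real Q))"
  proof (intro sum_mono)
    fix j assume "j \<in> {..<n}"
    then have "j < n" by simp
    show "\<bar>A k i j * (traj n Q A x0 k j - yex n A z k j)\<bar> \<le> A k i j * ((real k + 1) / real Q)"
      using mult_left_mono[OF Suc.IH[OF \<open>j<n\<close>] nn[OF \<open>j<n\<close>]] nn[OF \<open>j<n\<close>] by (simp add: abs_mult)
  qed
  also have "\<dots> = (\<Sum>j<n. A k i j) * ((real k + 1) / real Q)" by (simp only: sum_distrib_right)
  also have "\<dots> = (real k + 1) / real Q" using rs by simp
  finally have st: "\<bar>s - t\<bar> \<le> (real k + 1) / real Q" .
  have f: "s - 1 / real Q \<le> floorQ Q s" "floorQ Q s \<le> s" using floorQ_bounds[OF Q] by auto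
  have "traj n Q A x0 (Suc k) i = floorQ Q s" unfolding s_def by simp
  moreover have "yex n A z (Suc k) i = t" unfolding t_def by (simp add: mv_def)
  ultimately have "\<bar>traj n Q A x0 (Suc k) i - yex n A z (Suc k) i\<bar> \<le> (real k + 1) / real Q + 1 / real Q"
    using st f unfolding abs_le_iff by linarith
  then show ?case by (simp add: add_divide_distrib)
qed



lemma reach_sc:
  assumes E: "\<And>j. j < n \<Longrightarrow> (j, sc n j) \<in> E" and i: "i < n"
  shows "(i, (i + d) mod n) \<in> E\<^sup>*"
proof (induction d)
  case 0 then show ?case using i by simp
next
  case (Suc d)
  have n: "0 < n" using i by simp
  have "((i + d) mod n, sc n ((i + d) mod n)) \<in> E" using E n by simp
  moreover have "sc n ((i + d) mod n) = (i + Suc d) mod n" unfolding sc_def by (simp add: mod_Suc_eq)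
  ultimately show ?case using Suc.IH by (metis rtrancl.rtrancl_into_rtrancl)
qed

lemma sconn_sc:
  assumes E: "\<And>j. j < n \<Longrightarrow> (j, sc n j) \<in> E" shows "strongly_connected n E"
  unfolding strongly_connected_def
proof (intro allI impI)
  fix i j assume i: "i < n" and j: "j < n"
  have "(i + (j + n - i)) mod n = j" using i j by simp
  then show "(i, j) \<in> E\<^sup>*" using reach_sc[OF E i, of "j + n - i"] by simp
qed

lemma sconn_mono: "strongly_connected n E \<Longrightarrow> E \<subseteq> F \<Longrightarrow> strongly_connected n F"
  unfolding strongly_connected_def using rtrancl_mono by blast

lemma sc_neq: "2 \<le> n \<Longrightarrow> j < n \<Longrightarrow> sc n j \<noteq> j"
  by (simp add: sc_eq)

lemma sconn_Ma: assumes "2 \<le> n" "0 < r" shows "strongly_connected n (edges n (Ma n r))"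
proof (rule sconn_sc)
  fix j assume j: "j < n"
  have "sc n j < n" "prd n (sc n j) = j" using sc_lt[OF j] prd_sc[OF j] by auto
  moreover have "0 < Ma n r (sc n j) j"
  proof -
    have "Ma n r (sc n j) j = (if j = sc n j then 1 - r else 0) + r" unfolding Ma_def using prd_sc[OF j] by simp
    then show ?thesis using assms sc_neq[OF assms(1) j] by simp
  qed
  ultimately show "(j, sc n j) \<in> edges n (Ma n r)" unfolding edges_def using j by auto
qed

lemma sconn_conv: "strongly_connected n (E\<inverse>) \<Longrightarrow> strongly_connected n E"
  unfolding strongly_connected_def by (metis rtrancl_converseD)

lemma sconn_Mb: assumes "2 \<le> n" "0 < r" shows "strongly_connected n (edges n (Mb n r))"
proof (rule sconn_conv, rule sconn_sc)
  fix j assume j: "j < n"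
  have "Mb n r j (sc n j) = (if sc n j = j then 1 - r else 0) + r" unfolding Mb_def by simp
  then have "0 < Mb n r j (sc n j)" using assms sc_neq[OF assms(1) j] by simp
  then show "(j, sc n j) \<in> (edges n (Mb n r))\<inverse>" unfolding edges_def using j sc_lt[OF j] by auto
qed

lemma Aseq_props:
  assumes n: "2 \<le> n" and r: "0 < r" "r \<le> 1 / 2" and B: "1 \<le> B"
  shows "doubly_stochastic n (Aseq n r B t)"
    and "i < n \<Longrightarrow> 0 < Aseq n r B t i i"
    and "0 < Aseq n r B t i j \<Longrightarrow> r \<le> Aseq n r B t i j"
    and "strongly_connected n (\<Union>t\<in>{k*B..<(k+1)*B}. edges n (Aseq n r B t))"
proof -
  show "doubly_stochastic n (Aseq n r B t)" using r ds_Ma ds_Mb ds_Im unfolding Aseq_def by auto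
  show "i < n \<Longrightarrow> 0 < Aseq n r B t i i" using r unfolding Aseq_def Ma_def Mb_def Im_def by auto
  show "0 < Aseq n r B t i j \<Longrightarrow> r \<le> Aseq n r B t i j"
    using r unfolding Aseq_def Ma_def Mb_def Im_def by (auto split: if_splits)
  define t0 where "t0 = (B - 1) + k * B"
  have t0: "t0 \<in> {k*B..<(k+1)*B}" unfolding t0_def using B by auto
  have "t0 mod B = (B - 1) mod B" unfolding t0_def by (simp only: mod_mult_self1)
  then have "t0 mod B = B - 1" using B by simp
  moreover have "t0 div B = k" unfolding t0_def using B by (simp only: div_mult_self1) simp
  ultimately have "strongly_connected n (edges n (Aseq n r B t0))"
    unfolding Aseq_def using sconn_Ma[OF n r(1)] sconn_Mb[OF n r(1)] by auto
  then show "strongly_connected n (\<Union>t\<in>{k*B..<(k+1)*B}. edges n (Aseq n r B t))"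
    by (rule sconn_mono) (use t0 in blast)
qed



lemma one_minus_cos_le: "1 - cos (2 * pi / real n) \<le> 32 / (real n)\<^sup>2"
proof (cases "n = 0")
  case True then show ?thesis by simp
next
  case False
  define w where "w = pi / real n"
  have "cos (2 * w) = 1 - 2 * sin w ^ 2" by (rule cos_double_sin)
  moreover have "sin w ^ 2 \<le> w ^ 2" using abs_sin_x_le_abs_x[of w] by (simp add: abs_le_square_iff)
  ultimately have a: "1 - cos (2 * w) \<le> 2 * w ^ 2" by simp
  have "w ^ 2 = pi ^ 2 / (real n)\<^sup>2" unfolding w_def by (simp add: power_divide)
  moreover have "pi ^ 2 \<le> 16"
  proof -
    have "pi * pi \<le> 4 * 4" using pi_less_4 pi_gt_zero by (intro mult_mono) auto
    then show ?thesis by (simp add: power2_eq_square)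
  qed
  ultimately have "2 * w ^ 2 \<le> 32 / (real n)\<^sup>2" using False by (simp add: divide_right_mono)
  moreover have "2 * w = 2 * pi / real n" unfolding w_def by simp
  ultimately show ?thesis using a by simp
qed

lemma mu_bounds:
  assumes n: "10 \<le> n" and r: "0 < r" "r < 1/2"
  shows "1 - mu n r \<le> 64 * r / (real n)\<^sup>2" "0 \<le> 1 - mu n r" "17/25 \<le> mu n r"
    "ln (1 / mu n r) \<le> 100 * r / (real n)\<^sup>2"
proof -
  define a where "a = 1 - cos (2 * pi / real n)"
  have a0: "0 \<le> a" unfolding a_def by simp
  have a1: "a \<le> 32 / (real n)\<^sup>2" unfolding a_def by (rule one_minus_cos_le)
  have e: "1 - mu n r = 2 * r * (1 - r) * a" unfolding mu_def a_def by simp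
  have "2 * r * (1 - r) * a \<le> 2 * r * 1 * (32 / (real n)\<^sup>2)"
    using r a0 a1 by (intro mult_mono) auto
  then show b: "1 - mu n r \<le> 64 * r / (real n)\<^sup>2" using e by simp
  show "0 \<le> 1 - mu n r" using e r a0 by simp
  have "10 \<le> real n" using n by simp
  then have "10 * 10 \<le> real n * real n" by (intro mult_mono) auto
  then have nn: "100 \<le> (real n)\<^sup>2" by (simp add: power2_eq_square)
  have "64 * r / (real n)\<^sup>2 \<le> 64 * r / 100" using nn r n by (intro divide_left_mono) auto
  then show m: "17/25 \<le> mu n r" using b r by linarith
  have "ln (1 / mu n r) \<le> 1 / mu n r - 1" using m by (intro ln_le_minus_one) auto
  also have "\<dots> = (1 - mu n r) / mu n r" using m by (simp add: field_simps)
  also have "\<dots> \<le> (64 * r / (real n)\<^sup>2) / (17/25)"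
    using m b e r a0 by (intro frac_le) auto
  also have "\<dots> = (1600/17) * (r / (real n)\<^sup>2)" by simp
  also have "\<dots> \<le> 100 * (r / (real n)\<^sup>2)" using r by (intro mult_right_mono) auto
  also have "\<dots> = 100 * r / (real n)\<^sup>2" by simp
  finally show "ln (1 / mu n r) \<le> 100 * r / (real n)\<^sup>2" .
qed

lemma cv_props: assumes "2 \<le> n" shows "\<And>i. \<bar>cv n i\<bar> \<le> 1" and "0 < Vlow n (cv n)"
proof -
  show "\<And>i. \<bar>cv n i\<bar> \<le> 1" unfolding cv_def by simp
  have c0: "cv n 0 = 1" unfolding cv_def by simp
  have "cos (2 * pi / real n) < cos 0"
    using assms by (intro cos_monotone_0_pi) (auto simp: field_simps)
  then have c1: "cv n 1 < 1" unfolding cv_def by simp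
  have "minval n (cv n) \<le> cv n 1" using assms by (intro minval_le) auto
  then have "0 < (cv n 0 - minval n (cv n))\<^sup>2" using c0 c1 by simp
  also have "\<dots> \<le> Vlow n (cv n)" unfolding Vlow_def
    using assms by (intro member_le_sum[of 0 "{..<n}" "\<lambda>i. (cv n i - minval n (cv n))\<^sup>2"]) auto
  finally show "0 < Vlow n (cv n)" .
qed



lemma main_lemma:
  fixes B :: nat and \<eta> \<epsilon> :: real and n :: nat
  assumes B: "B \<ge> 1" and eta: "0 < \<eta>" "\<eta> < 1/2" and eps: "0 < \<epsilon>" "\<epsilon> < 1" and n: "n \<ge> 10"
  shows "\<exists>(A::nat \<Rightarrow> nat \<Rightarrow> nat \<Rightarrow> real) (Q::nat) (x0::nat \<Rightarrow> real).
         Q > 0 \<and>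
         (\<forall>i<n. \<exists>m::int. x0 i = real_of_int m / real Q) \<and>
         (\<forall>k. doubly_stochastic n (A k)) \<and>
         (\<forall>k. \<forall>i<n. A k i i > 0) \<and>
         (\<forall>k. \<forall>i<n. \<forall>j<n. A k i j > 0 \<longrightarrow> A k i j \<ge> \<eta>) \<and>
         (\<forall>k. strongly_connected n (\<Union>t\<in>{k*B..<(k+1)*B}. edges n (A t))) \<and>
         Vlow n x0 > 0 \<and>
         (\<forall>k. Vlow n (traj n Q A x0 k) / Vlow n x0 \<le> \<epsilon> \<longrightarrow>
              real k \<ge> (1/400) * (real n)\<^sup>2 / \<eta> * real B * ln (1/\<epsilon>))"
proof -
  define W where "W = Vlow n (cv n)"
  define \<mu> where "\<mu> = mu n \<eta>"
  define Tb where "Tb = (1/400) * (real n)\<^sup>2 / \<eta> * real B * ln (1/\<epsilon>)"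
  define se where "se = sqrt \<epsilon>"
  have n2: "2 \<le> n" using n by simp
  have W0: "0 < W" using cv_props(2)[OF n2] unfolding W_def .
  have se0: "0 < se" unfolding se_def using eps by simp
  have se1: "se < 1" unfolding se_def using eps by simp
  have sesq: "\<epsilon> = se * se" unfolding se_def using eps by simp
  have ese: "\<epsilon> < se" using sesq se0 se1 by (simp add: mult_less_cancel_left1)
  have lne: "ln (1/\<epsilon>) = - ln \<epsilon>" using eps by (simp add: ln_div)
  have lnpos: "0 < ln (1/\<epsilon>)" using eps by simp
  have Tb0: "0 \<le> Tb" unfolding Tb_def using eta lnpos by simp
  define X where "X = 16 * real n * (Tb + 2) / (W * (se - \<epsilon>))"
  define Q where "Q = nat \<lceil>X\<rceil> + 1"
  have QX: "X < real Q" unfolding Q_def using real_nat_ceiling_ge[of X] by simp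
  have Q0: "0 < Q" unfolding Q_def by simp
  have Qr: "0 < real Q" using Q0 by simp
  have Q1: "1 \<le> real Q" using Q0 by simp
  define D where "D = 8 * real n * (Tb + 2) / real Q"
  have Wse: "0 < W * (se - \<epsilon>)" using W0 ese by simp
  have "16 * real n * (Tb + 2) < real Q * (W * (se - \<epsilon>))"
    using QX Wse unfolding X_def by (simp add: pos_divide_less_eq)
  then have DW: "D \<le> W * (se - \<epsilon>) / 2" unfolding D_def using Qr by (simp add: pos_divide_le_eq field_simps)
  have "16 * real n \<le> 8 * real n * (Tb + 2)"
  proof -
    have "0 \<le> real n * Tb" using Tb0 by simp
    then show ?thesis by (simp add: algebra_simps)
  qed
  then have D16: "16 * real n / real Q \<le> D" unfolding D_def using Qr
    by (intro divide_right_mono) auto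
  have D0: "0 \<le> D" unfolding D_def using Tb0 Qr by simp
  have DW2: "D < W" using DW W0 ese se1 eps
  proof -
    have "W * (se - \<epsilon>) < W * 1" using W0 se1 eps by (intro mult_strict_left_mono) auto
    then show ?thesis using DW D0 by simp
  qed
  define A where "A = Aseq n \<eta> B"
  define x0 where "x0 = (\<lambda>i. floorQ Q (cv n i))"
  have eta2: "\<eta> \<le> 1/2" using eta by simp
  have ds: "\<And>k. doubly_stochastic n (A k)" unfolding A_def using Aseq_props(1)[OF n2 eta(1) eta2 B] .
  have x0e: "\<bar>x0 i - cv n i\<bar> \<le> 1 / real Q" for i
    unfolding x0_def using floorQ_bounds[OF Q0, of "cv n i"] by (simp add: abs_le_iff)
  have err: "\<bar>traj n Q A x0 k i - yex n A (cv n) k i\<bar> \<le> (real k + 1) / real Q" if "i < n" for k i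
    using traj_err[OF Q0 ds x0e that] .
  have yb: "\<bar>yex n A (cv n) k i\<bar> \<le> 1" if "i < n" for k i
    using yex_bound[OF ds cv_props(1)[OF n2] that] .
  have n0: "0 < n" using n by simp
  have P0: "W - 8 * real n * (1 / real Q) \<le> Vlow n x0 \<and> Vlow n x0 \<le> W + real n * (8 * (1 / real Q) + 4 * (1 / real Q)\<^sup>2)"
    using Vlow_pert[OF n0, of x0 "cv n" "1 / real Q"] x0e cv_props(1)[OF n2] unfolding W_def by simp
  have "(1 / real Q)\<^sup>2 \<le> 1 / real Q" using Q1 by (simp add: power2_eq_square field_simps)
  then have "real n * (8 * (1 / real Q) + 4 * (1 / real Q)\<^sup>2) \<le> real n * (12 * (1 / real Q))"
    by (intro mult_left_mono) auto
  also have "\<dots> \<le> 16 * real n / real Q" using Qr by (simp add: divide_right_mono)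
  also have "\<dots> \<le> D" using D16 by simp
  finally have V0up: "Vlow n x0 \<le> W + D" using P0 by linarith
  have "8 * real n / real Q \<le> 16 * real n / real Q" using Qr by (intro divide_right_mono) auto
  then have "8 * real n * (1 / real Q) \<le> D" using D16 by simp
  then have V0lo: "W - D \<le> Vlow n x0" using P0 by linarith
  have V0: "0 < Vlow n x0" using V0lo DW2 by linarith
  have mb: "17/25 \<le> \<mu>" "ln (1 / \<mu>) \<le> 100 * \<eta> / (real n)\<^sup>2"
    unfolding \<mu>_def using mu_bounds[OF n eta] by auto
  have final: "Tb \<le> real k" if rat: "Vlow n (traj n Q A x0 k) / Vlow n x0 \<le> \<epsilon>" for k
  proof (rule ccontr)
    assume "\<not> Tb \<le> real k"
    then have kT: "real k < Tb" by simp
    define J where "J = k div B"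
    define p where "p = (J + 1) div 2"
    have h1: "Vlow n (traj n Q A x0 k) \<le> \<epsilon> * Vlow n x0" using rat V0 by (simp add: pos_divide_le_eq)
    have P: "Vlow n (yex n A (cv n) k) - 8 * real n * ((real k + 1) / real Q) \<le> Vlow n (traj n Q A x0 k)"
      using Vlow_pert[OF n0, of "traj n Q A x0 k" "yex n A (cv n) k" "(real k + 1) / real Q"] err yb by simp
    have "8 * real n * (real k + 1) \<le> 8 * real n * (Tb + 2)" using kT by (intro mult_left_mono) auto
    then have "8 * real n * (real k + 1) / real Q \<le> 8 * real n * (Tb + 2) / real Q"
      using Qr by (intro divide_right_mono) auto
    then have "8 * real n * ((real k + 1) / real Q) \<le> D" unfolding D_def by simp
    with P have h2: "Vlow n (yex n A (cv n) k) - D \<le> Vlow n (traj n Q A x0 k)" by linarith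
    have h3: "Vlow n (yex n A (cv n) k) = Vlow n (Yc n \<eta> J)"
      unfolding A_def J_def by (rule Vlow_cong) (rule yex_Yc[OF B])
    have h4: "\<mu> ^ (2 * p) * W \<le> Vlow n (Yc n \<eta> J)"
      unfolding \<mu>_def W_def p_def using Vlow_Yc[OF n2, of \<eta> J] eta mb(1) unfolding \<mu>_def by simp
    have "\<mu> ^ (2 * p) * W \<le> \<epsilon> * (W + D) + D" using h1 h2 h3 h4 V0up eps
      by (smt (verit) mult_left_mono)
    also have "\<dots> \<le> \<epsilon> * W + 2 * D" using eps D0 by (smt (verit) mult_left_le_one_le distrib_left)
    also have "\<dots> \<le> se * W" using DW by (simp add: algebra_simps)
    finally have "\<mu> ^ (2 * p) * W \<le> se * W" .
    then have h5: "\<mu> ^ (2 * p) \<le> se" using W0 by simp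
    have mu0: "0 < \<mu>" using mb by simp
    have "ln (\<mu> ^ (2 * p)) \<le> ln se" using h5 mu0 se0 by simp
    then have "real (2 * p) * ln \<mu> \<le> ln \<epsilon> / 2" unfolding se_def using eps by (simp add: ln_realpow ln_sqrt)
    moreover have "ln (1 / \<mu>) = - ln \<mu>" using mu0 by (simp add: ln_div)
    ultimately have "ln (1/\<epsilon>) \<le> 4 * real p * ln (1 / \<mu>)" using lne by simp
    also have "\<dots> \<le> 4 * real p * (100 * \<eta> / (real n)\<^sup>2)" using mb(2) by (intro mult_left_mono) auto
    finally have L: "ln (1/\<epsilon>) \<le> 400 * real p * \<eta> / (real n)\<^sup>2" by simp
    have nsq: "0 < (real n)\<^sup>2" using n0 by simp
    have "Tb = ((real n)\<^sup>2 * real B / (400 * \<eta>)) * ln (1/\<epsilon>)" unfolding Tb_def by simp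
    also have "\<dots> \<le> ((real n)\<^sup>2 * real B / (400 * \<eta>)) * (400 * real p * \<eta> / (real n)\<^sup>2)"
      using L eta by (intro mult_left_mono) auto
    also have "\<dots> = real B * real p" using eta nsq by (simp add: field_simps)
    finally have TB: "Tb \<le> real B * real p" .
    have "p \<le> J" unfolding p_def by linarith
    then have "B * p \<le> B * J" by simp
    also have "B * J \<le> k" unfolding J_def by (rule times_div_less_eq_dividend)
    finally have "real B * real p \<le> real k" by (metis of_nat_le_iff of_nat_mult)
    then show False using TB kT by linarith
  qed
  show ?thesis
    apply (rule exI[of _ A], rule exI[of _ Q], rule exI[of _ x0])
    using Q0 ds V0 final Aseq_props[OF n2 eta(1) eta2 B]
    unfolding A_def x0_def floorQ_def Tb_def by auto
qed


theorem proposition6: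
  shows "\<exists>(c::real) > 0. \<exists>n0::nat.
    \<forall>(B::nat) (\<eta>::real) (\<epsilon>::real) (n::nat).
      B \<ge> 1 \<longrightarrow> 0 < \<eta> \<longrightarrow> \<eta> < 1/2 \<longrightarrow> 0 < \<epsilon> \<longrightarrow> \<epsilon> < 1 \<longrightarrow> n \<ge> n0 \<longrightarrow>
      (\<exists>(A::nat \<Rightarrow> nat \<Rightarrow> nat \<Rightarrow> real) (Q::nat) (x0::nat \<Rightarrow> real).
         Q > 0 \<and>
         (\<forall>i<n. \<exists>m::int. x0 i = real_of_int m / real Q) \<and>
         (\<forall>k. doubly_stochastic n (A k)) \<and>
         (\<forall>k. \<forall>i<n. A k i i > 0) \<and>
         (\<forall>k. \<forall>i<n. \<forall>j<n. A k i j > 0 \<longrightarrow> A k i j \<ge> \<eta>) \<and>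
         (\<forall>k. strongly_connected n (\<Union>t\<in>{k*B..<(k+1)*B}. edges n (A t))) \<and>
         Vlow n x0 > 0 \<and>
         (\<forall>k. Vlow n (traj n Q A x0 k) / Vlow n x0 \<le> \<epsilon> \<longrightarrow>
              real k \<ge> c * (real n)\<^sup>2 / \<eta> * real B * ln (1/\<epsilon>)))"
proof (intro exI[of _ "1/400::real"] conjI)
  show "(0::real) < 1/400" by simp
  show "\<exists>n0::nat. \<forall>(B::nat) (\<eta>::real) (\<epsilon>::real) (n::nat).
      B \<ge> 1 \<longrightarrow> 0 < \<eta> \<longrightarrow> \<eta> < 1/2 \<longrightarrow> 0 < \<epsilon> \<longrightarrow> \<epsilon> < 1 \<longrightarrow> n \<ge> n0 \<longrightarrow>
      (\<exists>(A::nat \<Rightarrow> nat \<Rightarrow> nat \<Rightarrow> real) (Q::nat) (x0::nat \<Rightarrow> real).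
         Q > 0 \<and>
         (\<forall>i<n. \<exists>m::int. x0 i = real_of_int m / real Q) \<and>
         (\<forall>k. doubly_stochastic n (A k)) \<and>
         (\<forall>k. \<forall>i<n. A k i i > 0) \<and>
         (\<forall>k. \<forall>i<n. \<forall>j<n. A k i j > 0 \<longrightarrow> A k i j \<ge> \<eta>) \<and>
         (\<forall>k. strongly_connected n (\<Union>t\<in>{k*B..<(k+1)*B}. edges n (A t))) \<and>
         Vlow n x0 > 0 \<and>
         (\<forall>k. Vlow n (traj n Q A x0 k) / Vlow n x0 \<le> \<epsilon> \<longrightarrow>
              real k \<ge> (1/400) * (real n)\<^sup>2 / \<eta> * real B * ln (1/\<epsilon>)))"
    by (intro exI[of _ "10::nat"] allI impI main_lemma)
qed

end
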